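(* (Uncertainty Principle.) Let $G$ be a locally compact abelian group with dual group $\Gamma$, let $(\mu,\nu)$ be a spectral pair of positive Borel measures on $(G,\Gamma)$ with associated unitary $F\colon\mathcal{L}^2(\mu)\to\mathcal{L}^2(\nu)$, and let $f\in\mathcal{L}^2(\mu)$ with $\|f\|_\mu>0$. Let $\varepsilon,\delta\ge0$. If $A\subset G$ and $B\subset\Gamma$ are measurable sets such that $\|f-\chi_Af\|_\mu\le\varepsilon\|f\|_\mu$ and $\|Ff-\chi_BFf\|_\nu\le\delta\|Ff\|_\nu$, then $(1-\varepsilon-\delta)^2\le\mu(A)\nu(B)$.
   Context: $G$ is written additively; $\Gamma=\hat G$ is the group of continuous homomorphisms $G\to\mathbb{T}$ (unit circle in $\mathbb{C}$), with $G$ identified with the dual of $\Gamma$. Write $\langle x,\xi\rangle$ for the pairing, $e_\xi(x)=e_x(\xi)=\langle x,\xi\rangle$. $(\mu,\nu)$ is a spectral pair if, with $(Ff)(\xi)=\int_G f(x)\overline{e_\xi(x)}\,d\mu(x)$ for $f\in\mathcal{L}^1\cap\mathcal{L}^2(\mu)$, the set $\{Ff\}$ is dense in $\mathcal{L}^2(\nu)$ and $\int_\Gamma|Ff|^2d\nu=\int_G|f|^2d\mu$ for all such $f$; $F$ then extends by continuity to an isometric isomorphism of $\mathcal{L}^2(\mu)$ onto $\mathcal{L}^2(\nu)$. $\chi_A$ denotes the indicator function of $A$. *)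

theory Defs
  imports "HOL-Analysis.Analysis"
begin

definition lca_group :: "'g::{t2_space,ab_group_add} itself \<Rightarrow> bool" where
  "lca_group _ \<longleftrightarrow>
     continuous_on UNIV (\<lambda>p::'g \<times> 'g. fst p + snd p) \<and>
     continuous_on UNIV (uminus :: 'g \<Rightarrow> 'g) \<and>
     locally_compact_space (euclidean :: 'g topology)"

text \<open>The dual group: continuous homomorphisms into the unit circle; pairing is application.\<close>
definition chars :: "('g::{topological_space,ab_group_add} \<Rightarrow> complex) set" where
  "chars = {ch. continuous_on UNIV ch \<and> (\<forall>x y. ch (x + y) = ch x * ch y) \<and> (\<forall>x. cmod (ch x) = 1)}"

text \<open>Topology of the dual group: uniform convergence on compact sets (compact-open topology).\<close>
definition dual_topology :: "('g::{topological_space,ab_group_add} \<Rightarrow> complex) topology" where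
  "dual_topology = topology_generated_by
     {{ch \<in> chars. \<forall>x\<in>K. cmod (ch x - ch0 x) < r} | ch0 K r. ch0 \<in> chars \<and> compact K \<and> r > 0}"

definition dual_borel_measure :: "('g::{topological_space,ab_group_add} \<Rightarrow> complex) measure \<Rightarrow> bool" where
  "dual_borel_measure \<nu> \<longleftrightarrow> space \<nu> = chars \<and> sets \<nu> = sigma_sets chars {U. openin dual_topology U}"

definition L2 :: "'a measure \<Rightarrow> ('a \<Rightarrow> complex) \<Rightarrow> bool" where
  "L2 M f \<longleftrightarrow> f \<in> borel_measurable M \<and> integrable M (\<lambda>x. (cmod (f x))\<^sup>2)"

definition L2norm :: "'a measure \<Rightarrow> ('a \<Rightarrow> complex) \<Rightarrow> real" where
  "L2norm M f = sqrt (LINT x|M. (cmod (f x))\<^sup>2)"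

definition fourier :: "'g measure \<Rightarrow> ('g \<Rightarrow> complex) \<Rightarrow> (('g \<Rightarrow> complex) \<Rightarrow> complex)" where
  "fourier \<mu> f = (\<lambda>\<xi>. LINT x|\<mu>. f x * cnj (\<xi> x))"

definition spectral_pair :: "'g measure \<Rightarrow> ('g \<Rightarrow> complex) measure \<Rightarrow> bool" where
  "spectral_pair \<mu> \<nu> \<longleftrightarrow>
     (\<forall>f. integrable \<mu> f \<and> L2 \<mu> f \<longrightarrow>
          L2 \<nu> (fourier \<mu> f) \<and> L2norm \<nu> (fourier \<mu> f) = L2norm \<mu> f) \<and>
     (\<forall>g. L2 \<nu> g \<longrightarrow> (\<forall>e>0. \<exists>f. integrable \<mu> f \<and> L2 \<mu> f \<and>
          L2norm \<nu> (\<lambda>\<xi>. fourier \<mu> f \<xi> - g \<xi>) < e))"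

text \<open>g represents F f, where F is the extension by continuity of the Fourier transform
  from L1 \<inter> L2 to L2.\<close>
definition fourier_ext :: "'g measure \<Rightarrow> ('g \<Rightarrow> complex) measure \<Rightarrow> ('g \<Rightarrow> complex)
     \<Rightarrow> (('g \<Rightarrow> complex) \<Rightarrow> complex) \<Rightarrow> bool" where
  "fourier_ext \<mu> \<nu> f g \<longleftrightarrow> L2 \<nu> g \<and>
     (\<exists>fs. (\<forall>n. integrable \<mu> (fs n) \<and> L2 \<mu> (fs n)) \<and>
        (\<lambda>n. L2norm \<mu> (\<lambda>x. fs n x - f x)) \<longlonglongrightarrow> 0 \<and>
        (\<lambda>n. L2norm \<nu> (\<lambda>\<xi>. fourier \<mu> (fs n) \<xi> - g \<xi>)) \<longlonglongrightarrow> 0)"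

end

theory Submission
  imports Defs
begin



lemma cmod_add_sq: "(cmod (a + b))\<^sup>2 \<le> 2 * (cmod a)\<^sup>2 + 2 * (cmod b)\<^sup>2"
proof -
  have "cmod (a+b) \<le> cmod a + cmod b" by (rule norm_triangle_ineq)
  hence "(cmod (a + b))\<^sup>2 \<le> (cmod a + cmod b)\<^sup>2" by (simp add: power_mono)
  also have "\<dots> \<le> 2 * (cmod a)\<^sup>2 + 2 * (cmod b)\<^sup>2"
  proof -
    have "0 \<le> (cmod a - cmod b)\<^sup>2" by simp
    thus ?thesis by (simp add: power2_sum power2_diff)
  qed
  finally show ?thesis .
qed

lemma L2_add:
  assumes "L2 M f" "L2 M g" shows "L2 M (\<lambda>x. f x + g x)"
  unfolding L2_def
proof
  show "(\<lambda>x. f x + g x) \<in> borel_measurable M" using assms by (auto simp: L2_def)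
  show "integrable M (\<lambda>x. (cmod (f x + g x))\<^sup>2)"
  proof (rule Bochner_Integration.integrable_bound)
    show "integrable M (\<lambda>x. 2 * (cmod (f x))\<^sup>2 + 2 * (cmod (g x))\<^sup>2)"
      using assms by (auto simp: L2_def)
    show "(\<lambda>x. (cmod (f x + g x))\<^sup>2) \<in> borel_measurable M" using assms by (auto simp: L2_def)
    show "AE x in M. norm ((cmod (f x + g x))\<^sup>2) \<le> norm (2 * (cmod (f x))\<^sup>2 + 2 * (cmod (g x))\<^sup>2)"
      using cmod_add_sq by (auto intro!: AE_I2 simp del: norm_mult)
  qed
qed

lemma L2_uminus: assumes "L2 M f" shows "L2 M (\<lambda>x. - f x)"
  using assms by (auto simp: L2_def)

lemma L2_diff: assumes "L2 M f" "L2 M g" shows "L2 M (\<lambda>x. f x - g x)"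
  using L2_add[OF assms(1) L2_uminus[OF assms(2)]] by simp

lemma L2_ind: assumes "L2 M f" "A \<in> sets M" shows "L2 M (\<lambda>x. indicator A x * f x)"
  unfolding L2_def
proof
  show "(\<lambda>x. indicator A x * f x) \<in> borel_measurable M" using assms by (auto simp: L2_def)
  show "integrable M (\<lambda>x. (cmod (indicator A x * f x))\<^sup>2)"
  proof (rule Bochner_Integration.integrable_bound)
    show "integrable M (\<lambda>x. (cmod (f x))\<^sup>2)" using assms by (auto simp: L2_def)
    show "(\<lambda>x. (cmod (indicator A x * f x))\<^sup>2) \<in> borel_measurable M" using assms by (auto simp: L2_def)
    show "AE x in M. norm ((cmod (indicator A x * f x))\<^sup>2) \<le> norm ((cmod (f x))\<^sup>2)"
      by (auto intro!: AE_I2 simp: indicator_def)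
  qed
qed

lemma L2norm_nonneg: "L2norm M f \<ge> 0"
  unfolding L2norm_def by (simp add: integral_nonneg_AE)

lemma L2norm_cong: "(\<And>x. x \<in> space M \<Longrightarrow> f x = g x) \<Longrightarrow> L2norm M f = L2norm M g"
  unfolding L2norm_def by (metis (mono_tags, lifting) Bochner_Integration.integral_cong)

lemma L2norm_commute: "L2norm M (\<lambda>x. f x - g x) = L2norm M (\<lambda>x. g x - f x)"
  unfolding L2norm_def by (simp add: norm_minus_commute)

lemma CS:
  assumes "L2 M f" "L2 M g"
  shows "integrable M (\<lambda>x. cmod (f x) * cmod (g x))"
    and "(LINT x|M. cmod (f x) * cmod (g x)) \<le> L2norm M f * L2norm M g"
proof -
  have mf: "f \<in> borel_measurable M" and mg: "g \<in> borel_measurable M"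
    and iF: "integrable M (\<lambda>x. (cmod (f x))\<^sup>2)" and iG: "integrable M (\<lambda>x. (cmod (g x))\<^sup>2)"
    using assms by (auto simp: L2_def)
  have pw: "a * b \<le> (t * a\<^sup>2 + b\<^sup>2 / t) / 2" if "t > 0" for a b t :: real
  proof -
    have "0 \<le> (t * a - b)\<^sup>2" by simp
    hence "2 * t * (a * b) \<le> t * (t * a\<^sup>2) + b\<^sup>2" by (simp add: power2_eq_square algebra_simps)
    thus ?thesis using that by (simp add: field_simps power2_eq_square)
  qed
  show i: "integrable M (\<lambda>x. cmod (f x) * cmod (g x))"
  proof (rule Bochner_Integration.integrable_bound)
    show "integrable M (\<lambda>x. ((cmod (f x))\<^sup>2 + (cmod (g x))\<^sup>2))" using iF iG by auto
    show "(\<lambda>x. cmod (f x) * cmod (g x)) \<in> borel_measurable M" using mf mg by auto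
    show "AE x in M. norm (cmod (f x) * cmod (g x)) \<le> norm ((cmod (f x))\<^sup>2 + (cmod (g x))\<^sup>2)"
    proof (intro AE_I2)
      fix x
      have h0: "0 \<le> cmod (f x) * cmod (g x)" by simp
      have "cmod (f x) * cmod (g x) * 2 \<le> ((cmod (f x))\<^sup>2 + (cmod (g x))\<^sup>2)"
        using pw[of 1 "cmod (f x)" "cmod (g x)"] by simp
      hence "cmod (f x) * cmod (g x) \<le> ((cmod (f x))\<^sup>2 + (cmod (g x))\<^sup>2)" using h0 by linarith
      thus "norm (cmod (f x) * cmod (g x)) \<le> norm ((cmod (f x))\<^sup>2 + (cmod (g x))\<^sup>2)" by simp
    qed
  qed
  define F where "F = (LINT x|M. (cmod (f x))\<^sup>2)"
  define G where "G = (LINT x|M. (cmod (g x))\<^sup>2)"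
  have F0: "F \<ge> 0" "G \<ge> 0" unfolding F_def G_def by (auto intro: integral_nonneg_AE)
  have nF: "L2norm M f = sqrt F" "L2norm M g = sqrt G" by (auto simp: L2norm_def F_def G_def)
  have bnd: "(LINT x|M. cmod (f x) * cmod (g x)) \<le> (t * F + G / t) / 2" if "t > 0" for t
  proof -
    have "(LINT x|M. cmod (f x) * cmod (g x)) \<le> (LINT x|M. (t * (cmod (f x))\<^sup>2 + (cmod (g x))\<^sup>2 / t) / 2)"
      by (rule integral_mono[OF i]) (use iF iG pw that in auto)
    also have "\<dots> = (t * F + G / t) / 2" unfolding F_def G_def using iF iG by simp
    finally show ?thesis .
  qed
  show "(LINT x|M. cmod (f x) * cmod (g x)) \<le> L2norm M f * L2norm M g"
  proof (cases "F = 0 \<or> G = 0")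
    case True
    hence "AE x in M. (cmod (f x))\<^sup>2 = 0 \<or> (cmod (g x))\<^sup>2 = 0"
    proof
      assume "F = 0" thus ?thesis unfolding F_def using iF
        by (subst (asm) integral_nonneg_eq_0_iff_AE) (auto intro: AE_mp)
    next
      assume "G = 0" thus ?thesis unfolding G_def using iG
        by (subst (asm) integral_nonneg_eq_0_iff_AE) (auto intro: AE_mp)
    qed
    hence "AE x in M. cmod (f x) * cmod (g x) = 0" by auto
    hence "(LINT x|M. cmod (f x) * cmod (g x)) = 0" by (rule integral_eq_zero_AE)
    thus ?thesis using nF F0 by simp
  next
    case False
    hence pos: "F > 0" "G > 0" using F0 by auto
    define t where "t = sqrt G / sqrt F"
    have t: "t > 0" using pos by (simp add: t_def)
    have sF: "sqrt F * sqrt F = F" "sqrt G * sqrt G = G" using pos by simp_all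
    have "t * F = sqrt F * sqrt G" using pos unfolding t_def
      by (subst (2) sF(1)[symmetric]) (simp add: field_simps)
    moreover have "G / t = sqrt F * sqrt G" using pos unfolding t_def
      by (subst (1) sF(2)[symmetric]) (simp add: field_simps)
    ultimately show ?thesis using bnd[OF t] nF by simp
  qed
qed



lemma Minkowski:
  assumes "L2 M f" "L2 M g"
  shows "L2norm M (\<lambda>x. f x + g x) \<le> L2norm M f + L2norm M g"
proof -
  have iF: "integrable M (\<lambda>x. (cmod (f x))\<^sup>2)" and iG: "integrable M (\<lambda>x. (cmod (g x))\<^sup>2)"
    using assms by (auto simp: L2_def)
  have iS: "integrable M (\<lambda>x. (cmod (f x + g x))\<^sup>2)" using L2_add[OF assms] by (auto simp: L2_def)
  note cs = CS[OF assms]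
  have "(LINT x|M. (cmod (f x + g x))\<^sup>2) \<le>
        (LINT x|M. (cmod (f x))\<^sup>2 + 2 * (cmod (f x) * cmod (g x)) + (cmod (g x))\<^sup>2)"
  proof (rule integral_mono[OF iS])
    show "integrable M (\<lambda>x. (cmod (f x))\<^sup>2 + 2 * (cmod (f x) * cmod (g x)) + (cmod (g x))\<^sup>2)"
      using iF iG cs(1) by auto
    fix x
    have "cmod (f x + g x) \<le> cmod (f x) + cmod (g x)" by (rule norm_triangle_ineq)
    hence "(cmod (f x + g x))\<^sup>2 \<le> (cmod (f x) + cmod (g x))\<^sup>2" by (simp add: power_mono)
    thus "(cmod (f x + g x))\<^sup>2 \<le> (cmod (f x))\<^sup>2 + 2 * (cmod (f x) * cmod (g x)) + (cmod (g x))\<^sup>2"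
      by (simp add: power2_sum)
  qed
  also have "\<dots> = (LINT x|M. (cmod (f x))\<^sup>2) + 2 * (LINT x|M. cmod (f x) * cmod (g x)) + (LINT x|M. (cmod (g x))\<^sup>2)"
    using iF iG cs(1) by simp
  also have "\<dots> \<le> (L2norm M f)\<^sup>2 + 2 * (L2norm M f * L2norm M g) + (L2norm M g)\<^sup>2"
    using cs(2) by (simp add: L2norm_def integral_nonneg_AE)
  also have "\<dots> = (L2norm M f + L2norm M g)\<^sup>2" by (simp add: power2_sum)
  finally have "sqrt (LINT x|M. (cmod (f x + g x))\<^sup>2) \<le> sqrt ((L2norm M f + L2norm M g)\<^sup>2)"
    by (rule real_sqrt_le_mono)
  thus ?thesis unfolding L2norm_def[of M "\<lambda>x. f x + g x"] using L2norm_nonneg[of M f] L2norm_nonneg[of M g]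
    by simp
qed

lemma tri1:
  assumes "L2 M a" "L2 M b"
  shows "L2norm M a \<le> L2norm M (\<lambda>x. a x - b x) + L2norm M b"
proof -
  have "L2norm M a = L2norm M (\<lambda>x. (a x - b x) + b x)" by simp
  also have "\<dots> \<le> L2norm M (\<lambda>x. a x - b x) + L2norm M b"
    by (rule Minkowski[OF L2_diff[OF assms] assms(2)])
  finally show ?thesis .
qed

lemma tri2:
  assumes "L2 M a" "L2 M b" "L2 M c"
  shows "L2norm M (\<lambda>x. a x - c x) \<le> L2norm M (\<lambda>x. a x - b x) + L2norm M (\<lambda>x. b x - c x)"
proof -
  have "L2norm M (\<lambda>x. a x - c x) = L2norm M (\<lambda>x. (a x - b x) + (b x - c x))" by simp
  also have "\<dots> \<le> L2norm M (\<lambda>x. a x - b x) + L2norm M (\<lambda>x. b x - c x)"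
    by (rule Minkowski[OF L2_diff[OF assms(1,2)] L2_diff[OF assms(2,3)]])
  finally show ?thesis .
qed

lemma L2norm_ind_le:
  assumes "L2 M f" "A \<in> sets M"
  shows "L2norm M (\<lambda>x. indicator A x * f x) \<le> L2norm M f"
  unfolding L2norm_def
proof (rule real_sqrt_le_mono, rule integral_mono)
  show "integrable M (\<lambda>x. (cmod (indicator A x * f x))\<^sup>2)" using L2_ind[OF assms] by (simp add: L2_def)
  show "integrable M (\<lambda>x. (cmod (f x))\<^sup>2)" using assms by (simp add: L2_def)
  fix x show "(cmod (indicator A x * f x))\<^sup>2 \<le> (cmod (f x))\<^sup>2" by (simp add: indicator_def)
qed

lemma L2norm_null:
  assumes "L2 M f" "A \<in> null_sets M"
  shows "L2norm M (\<lambda>x. f x - indicator A x * f x) = L2norm M f"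
  unfolding L2norm_def
proof (intro arg_cong[where f=sqrt] integral_cong_AE)
  show "(\<lambda>x. (cmod (f x - indicator A x * f x))\<^sup>2) \<in> borel_measurable M"
    using L2_diff[OF assms(1) L2_ind[OF assms(1)]] assms by (auto simp: L2_def)
  show "(\<lambda>x. (cmod (f x))\<^sup>2) \<in> borel_measurable M" using assms by (auto simp: L2_def)
  show "AE x in M. (cmod (f x - indicator A x * f x))\<^sup>2 = (cmod (f x))\<^sup>2"
    using AE_not_in[OF assms(2)] by eventually_elim simp
qed

lemma cont_meas:
  assumes "sets M = sets borel" "continuous_on UNIV (g :: 'a::topological_space \<Rightarrow> 'b::topological_space)"
  shows "g \<in> borel_measurable M"
proof -
  have "g \<in> borel_measurable borel" using assms(2) by (rule borel_measurable_continuous_onI)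
  moreover have "borel_measurable M = (borel_measurable borel :: ('a \<Rightarrow> 'b) set)"
    by (rule measurable_cong_sets[OF assms(1) refl])
  ultimately show ?thesis by simp
qed

lemma chars_meas:
  assumes "sets M = sets borel" "\<xi> \<in> chars"
  shows "(\<lambda>x. cnj (\<xi> x)) \<in> borel_measurable M"
  using assms by (intro cont_meas) (auto simp: chars_def intro: continuous_on_cnj)

lemma fourier_integrable:
  assumes "sets M = sets borel" "\<xi> \<in> chars" "integrable M u"
  shows "integrable M (\<lambda>x. u x * cnj (\<xi> x))"
proof (rule Bochner_Integration.integrable_bound[OF assms(3)])
  show "(\<lambda>x. u x * cnj (\<xi> x)) \<in> borel_measurable M"
    using chars_meas[OF assms(1,2)] assms(3) by measurable
  show "AE x in M. norm (u x * cnj (\<xi> x)) \<le> norm (u x)"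
    using assms(2) by (auto simp: chars_def norm_mult)
qed

lemma fourier_diff:
  assumes "sets M = sets borel" "\<xi> \<in> chars" "integrable M u" "integrable M v"
  shows "fourier M (\<lambda>x. u x - v x) \<xi> = fourier M u \<xi> - fourier M v \<xi>"
  unfolding fourier_def
  using fourier_integrable[OF assms(1,2,3)] fourier_integrable[OF assms(1,2,4)]
  by (simp add: left_diff_distrib)

lemma fourier_bound:
  assumes "sets M = sets borel" "\<xi> \<in> chars" "L2 M f" "A \<in> sets M" "emeasure M A < \<infinity>"
  shows "integrable M (\<lambda>x. indicator A x * f x)"
    and "cmod (fourier M (\<lambda>x. indicator A x * f x) \<xi>) \<le> sqrt (measure M A) * L2norm M f"
proof -
  have mf: "f \<in> borel_measurable M" and iF: "integrable M (\<lambda>x. (cmod (f x))\<^sup>2)"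
    using assms by (auto simp: L2_def)
  have iA: "integrable M (indicator A :: _ \<Rightarrow> real)" using assms by (simp add: integrable_real_indicator)
  show ih: "integrable M (\<lambda>x. indicator A x * f x)"
  proof (rule Bochner_Integration.integrable_bound)
    show "integrable M (\<lambda>x. indicator A x + (cmod (f x))\<^sup>2)" using iA iF by auto
    show "(\<lambda>x. indicator A x * f x) \<in> borel_measurable M" using mf assms(4) by simp
    show "AE x in M. norm (indicator A x * f x) \<le> norm (indicator A x + (cmod (f x))\<^sup>2)"
    proof (intro AE_I2)
      fix x
      have "cmod (f x) \<le> 1 + (cmod (f x))\<^sup>2"
      proof (cases "cmod (f x) \<le> 1")
        case True thus ?thesis by (simp add: add_increasing2)
      next
        case False
        hence "cmod (f x) * 1 \<le> cmod (f x) * cmod (f x)" by (intro mult_left_mono) auto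
        thus ?thesis by (simp add: power2_eq_square)
      qed
      thus "norm (indicator A x * f x) \<le> norm (indicator A x + (cmod (f x))\<^sup>2 :: real)"
        by (auto simp: indicator_def)
    qed
  qed
  have eqA: "(\<lambda>x. (cmod (indicator A x :: complex))\<^sup>2) = indicator A"
    by (auto simp: indicator_def fun_eq_iff)
  have LA: "L2 M (indicator A :: _ \<Rightarrow> complex)"
    unfolding L2_def eqA using assms iA by auto
  have nA: "L2norm M (indicator A :: _ \<Rightarrow> complex) = sqrt (measure M A)"
    unfolding L2norm_def eqA using assms(4) by (simp add: Int_absorb2 sets.sets_into_space)
  have "cmod (fourier M (\<lambda>x. indicator A x * f x) \<xi>) \<le> (LINT x|M. norm (indicator A x * f x * cnj (\<xi> x)))"
    unfolding fourier_def by (rule integral_norm_bound)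
  also have "\<dots> = (LINT x|M. cmod (indicator A x) * cmod (f x))"
    using assms(2) by (intro Bochner_Integration.integral_cong) (auto simp: chars_def norm_mult)
  also have "\<dots> \<le> sqrt (measure M A) * L2norm M f"
    using CS(2)[OF LA assms(3)] nA by simp
  finally show "cmod (fourier M (\<lambda>x. indicator A x * f x) \<xi>) \<le> sqrt (measure M A) * L2norm M f" .
qed




theorem theoremA11:
  fixes \<mu> :: "'g::{t2_space,ab_group_add} measure"
    and \<nu> :: "('g \<Rightarrow> complex) measure"
    and f :: "'g \<Rightarrow> complex" and Ff :: "('g \<Rightarrow> complex) \<Rightarrow> complex"
    and \<epsilon> \<delta> :: real and A :: "'g set" and B :: "('g \<Rightarrow> complex) set"
  assumes "lca_group TYPE('g)"
    and "sets \<mu> = sets borel"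
    and "dual_borel_measure \<nu>"
    and "spectral_pair \<mu> \<nu>"
    and "L2 \<mu> f" and "L2norm \<mu> f > 0"
    and "fourier_ext \<mu> \<nu> f Ff"
    and "\<epsilon> \<ge> 0" and "\<delta> \<ge> 0" and "\<epsilon> + \<delta> \<le> 1"
    and "A \<in> sets \<mu>" and "B \<in> sets \<nu>"
    and "L2norm \<mu> (\<lambda>x. f x - indicator A x * f x) \<le> \<epsilon> * L2norm \<mu> f"
    and "L2norm \<nu> (\<lambda>\<xi>. Ff \<xi> - indicator B \<xi> * Ff \<xi>) \<le> \<delta> * L2norm \<nu> Ff"
  shows "ennreal ((1 - \<epsilon> - \<delta>)\<^sup>2) \<le> emeasure \<mu> A * emeasure \<nu> B"
proof -
  have spF: "L2 \<nu> (fourier \<mu> u) \<and> L2norm \<nu> (fourier \<mu> u) = L2norm \<mu> u"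
    if "integrable \<mu> u" "L2 \<mu> u" for u
    using assms(4) that unfolding spectral_pair_def by blast
  have spc: "space \<nu> = chars" using assms(3) by (simp add: dual_borel_measure_def)
  obtain fs where LFf: "L2 \<nu> Ff" and fsi: "\<And>n. integrable \<mu> (fs n)" and fsL: "\<And>n. L2 \<mu> (fs n)"
     and c1: "(\<lambda>n. L2norm \<mu> (\<lambda>x. fs n x - f x)) \<longlonglongrightarrow> 0"
     and c2: "(\<lambda>n. L2norm \<nu> (\<lambda>\<xi>. fourier \<mu> (fs n) \<xi> - Ff \<xi>)) \<longlonglongrightarrow> 0"
    using assms(7) unfolding fourier_ext_def by blast
  define N where "N = L2norm \<mu> f"
  have Npos: "N > 0" using assms(6) by (simp add: N_def)
  have N_eq: "L2norm \<nu> Ff = N"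
  proof (rule antisym)
    have lim: "(\<lambda>n. L2norm \<nu> (\<lambda>\<xi>. fourier \<mu> (fs n) \<xi> - Ff \<xi>) + L2norm \<mu> (\<lambda>x. fs n x - f x) + N)
        \<longlonglongrightarrow> N" using tendsto_add[OF tendsto_add[OF c2 c1] tendsto_const[of N]] by simp
    show "L2norm \<nu> Ff \<le> N"
    proof (rule LIMSEQ_le_const[OF lim], intro exI allI impI)
      fix n
      have "L2norm \<nu> Ff \<le> L2norm \<nu> (\<lambda>\<xi>. Ff \<xi> - fourier \<mu> (fs n) \<xi>) + L2norm \<nu> (fourier \<mu> (fs n))"
        by (rule tri1[OF LFf spF[OF fsi fsL, THEN conjunct1]])
      also have "\<dots> = L2norm \<nu> (\<lambda>\<xi>. fourier \<mu> (fs n) \<xi> - Ff \<xi>) + L2norm \<mu> (fs n)"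
        using spF[OF fsi fsL] L2norm_commute by metis
      also have "L2norm \<mu> (fs n) \<le> L2norm \<mu> (\<lambda>x. fs n x - f x) + N"
        unfolding N_def by (rule tri1[OF fsL assms(5)])
      finally show "L2norm \<nu> Ff \<le> L2norm \<nu> (\<lambda>\<xi>. fourier \<mu> (fs n) \<xi> - Ff \<xi>) + L2norm \<mu> (\<lambda>x. fs n x - f x) + N"
        by simp
    qed
    have lim2: "(\<lambda>n. L2norm \<mu> (\<lambda>x. fs n x - f x) + L2norm \<nu> (\<lambda>\<xi>. fourier \<mu> (fs n) \<xi> - Ff \<xi>) + L2norm \<nu> Ff)
        \<longlonglongrightarrow> L2norm \<nu> Ff" using tendsto_add[OF tendsto_add[OF c1 c2] tendsto_const[of "L2norm \<nu> Ff"]] by simp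
    show "N \<le> L2norm \<nu> Ff"
    proof (rule LIMSEQ_le_const[OF lim2], intro exI allI impI)
      fix n
      have "N \<le> L2norm \<mu> (\<lambda>x. f x - fs n x) + L2norm \<mu> (fs n)"
        unfolding N_def by (rule tri1[OF assms(5) fsL])
      also have "\<dots> = L2norm \<mu> (\<lambda>x. fs n x - f x) + L2norm \<nu> (fourier \<mu> (fs n))"
        using spF[OF fsi fsL] L2norm_commute by metis
      also have "L2norm \<nu> (fourier \<mu> (fs n)) \<le> L2norm \<nu> (\<lambda>\<xi>. fourier \<mu> (fs n) \<xi> - Ff \<xi>) + L2norm \<nu> Ff"
        by (rule tri1[OF spF[OF fsi fsL, THEN conjunct1] LFf])
      finally show "N \<le> L2norm \<mu> (\<lambda>x. fs n x - f x) + L2norm \<nu> (\<lambda>\<xi>. fourier \<mu> (fs n) \<xi> - Ff \<xi>) + L2norm \<nu> Ff"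
        by simp
    qed
  qed
  have zA: "1 - \<epsilon> - \<delta> = 0" if "emeasure \<mu> A = 0"
  proof -
    have "A \<in> null_sets \<mu>" using that assms(11) by (simp add: null_sets_def)
    hence "N \<le> \<epsilon> * N" using L2norm_null[OF assms(5)] assms(13) by (simp add: N_def)
    hence "\<epsilon> \<ge> 1" using Npos by simp
    thus ?thesis using assms(8-10) by linarith
  qed
  have zB: "1 - \<epsilon> - \<delta> = 0" if "emeasure \<nu> B = 0"
  proof -
    have "B \<in> null_sets \<nu>" using that assms(12) by (simp add: null_sets_def)
    hence "N \<le> \<delta> * N" using L2norm_null[OF LFf] assms(14) N_eq by simp
    hence "\<delta> \<ge> 1" using Npos by simp
    thus ?thesis using assms(8-10) by linarith
  qed
  consider (infA) "emeasure \<mu> A = top" | (infB) "emeasure \<nu> B = top"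
    | (fin) "emeasure \<mu> A < top" "emeasure \<nu> B < top" by (metis less_top)
  then show ?thesis
  proof cases
    case infA
    show ?thesis
    proof (cases "emeasure \<nu> B = 0")
      case True thus ?thesis using zB by simp
    next
      case False thus ?thesis using infA by (simp add: ennreal_top_mult)
    qed
  next
    case infB
    show ?thesis
    proof (cases "emeasure \<mu> A = 0")
      case True thus ?thesis using zA by simp
    next
      case False thus ?thesis using infB by (simp add: ennreal_mult_top)
    qed
  next
    case fin
    have fin': "emeasure \<mu> A < \<infinity>" "emeasure \<nu> B < \<infinity>" using fin by simp_all
    have one: "(\<lambda>_. 1) \<in> (chars :: ('g \<Rightarrow> complex) set)" by (simp add: chars_def)
    have ih: "integrable \<mu> (\<lambda>x. indicator A x * f x)"
      by (rule fourier_bound(1)[OF assms(2) one assms(5,11) fin'(1)])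
    have Lh: "L2 \<mu> (\<lambda>x. indicator A x * f x)" by (rule L2_ind[OF assms(5,11)])
    note Fh = spF[OF ih Lh]
    have fh_le: "L2norm \<nu> (\<lambda>\<xi>. Ff \<xi> - fourier \<mu> (\<lambda>x. indicator A x * f x) \<xi>)
        \<le> L2norm \<mu> (\<lambda>x. f x - indicator A x * f x)"
    proof -
      have lim: "(\<lambda>n. L2norm \<nu> (\<lambda>\<xi>. fourier \<mu> (fs n) \<xi> - Ff \<xi>) + L2norm \<mu> (\<lambda>x. fs n x - f x)
           + L2norm \<mu> (\<lambda>x. f x - indicator A x * f x))
        \<longlonglongrightarrow> L2norm \<mu> (\<lambda>x. f x - indicator A x * f x)"
        using tendsto_add[OF tendsto_add[OF c2 c1] tendsto_const[of "L2norm \<mu> (\<lambda>x. f x - indicator A x * f x)"]] by simp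
      show ?thesis
      proof (rule LIMSEQ_le_const[OF lim], intro exI allI impI)
        fix n
        have "L2norm \<nu> (\<lambda>\<xi>. Ff \<xi> - fourier \<mu> (\<lambda>x. indicator A x * f x) \<xi>)
          \<le> L2norm \<nu> (\<lambda>\<xi>. Ff \<xi> - fourier \<mu> (fs n) \<xi>) + L2norm \<nu> (\<lambda>\<xi>. fourier \<mu> (fs n) \<xi> - fourier \<mu> (\<lambda>x. indicator A x * f x) \<xi>)"
          by (rule tri2[OF LFf spF[OF fsi fsL, THEN conjunct1] Fh[THEN conjunct1]])
        also have "L2norm \<nu> (\<lambda>\<xi>. fourier \<mu> (fs n) \<xi> - fourier \<mu> (\<lambda>x. indicator A x * f x) \<xi>)
            = L2norm \<nu> (fourier \<mu> (\<lambda>x. fs n x - indicator A x * f x))"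
          by (rule L2norm_cong) (simp add: spc fourier_diff[OF assms(2) _ fsi ih])
        also have "\<dots> = L2norm \<mu> (\<lambda>x. fs n x - indicator A x * f x)"
          using spF[OF Bochner_Integration.integrable_diff[OF fsi ih] L2_diff[OF fsL Lh]] by simp
        also have "\<dots> \<le> L2norm \<mu> (\<lambda>x. fs n x - f x) + L2norm \<mu> (\<lambda>x. f x - indicator A x * f x)"
          by (rule tri2[OF fsL assms(5) Lh])
        also have "L2norm \<nu> (\<lambda>\<xi>. Ff \<xi> - fourier \<mu> (fs n) \<xi>) = L2norm \<nu> (\<lambda>\<xi>. fourier \<mu> (fs n) \<xi> - Ff \<xi>)"
          by (rule L2norm_commute)
        finally show "L2norm \<nu> (\<lambda>\<xi>. Ff \<xi> - fourier \<mu> (\<lambda>x. indicator A x * f x) \<xi>) \<le>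
           L2norm \<nu> (\<lambda>\<xi>. fourier \<mu> (fs n) \<xi> - Ff \<xi>) + L2norm \<mu> (\<lambda>x. fs n x - f x)
           + L2norm \<mu> (\<lambda>x. f x - indicator A x * f x)" by simp
      qed
    qed
    define mA where "mA = measure \<mu> A"
    define mB where "mB = measure \<nu> B"
    have mA0: "mA \<ge> 0" "mB \<ge> 0" by (simp_all add: mA_def mB_def)
    have hB: "L2norm \<nu> (\<lambda>\<xi>. indicator B \<xi> * fourier \<mu> (\<lambda>x. indicator A x * f x) \<xi>) \<le> sqrt (mA * mB) * N"
    proof -
      have LhB: "L2 \<nu> (\<lambda>\<xi>. indicator B \<xi> * fourier \<mu> (\<lambda>x. indicator A x * f x) \<xi>)"
        by (rule L2_ind[OF Fh[THEN conjunct1] assms(12)])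
      have iB: "integrable \<nu> (indicator B :: _ \<Rightarrow> real)" using assms(12) fin'(2) by (simp add: integrable_real_indicator)
      have "(LINT \<xi>|\<nu>. (cmod (indicator B \<xi> * fourier \<mu> (\<lambda>x. indicator A x * f x) \<xi>))\<^sup>2)
          \<le> (LINT \<xi>|\<nu>. indicator B \<xi> * (sqrt mA * N)\<^sup>2)"
      proof (rule integral_mono)
        show "integrable \<nu> (\<lambda>\<xi>. (cmod (indicator B \<xi> * fourier \<mu> (\<lambda>x. indicator A x * f x) \<xi>))\<^sup>2)"
          using LhB by (simp add: L2_def)
        show "integrable \<nu> (\<lambda>\<xi>. indicator B \<xi> * (sqrt mA * N)\<^sup>2)" using iB by simp
        fix \<xi> assume "\<xi> \<in> space \<nu>"
        hence "\<xi> \<in> chars" by (simp add: spc)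
        from fourier_bound(2)[OF assms(2) this assms(5,11) fin'(1)]
        have "cmod (fourier \<mu> (\<lambda>x. indicator A x * f x) \<xi>) \<le> sqrt mA * N" by (simp add: mA_def N_def)
        hence "(cmod (fourier \<mu> (\<lambda>x. indicator A x * f x) \<xi>))\<^sup>2 \<le> (sqrt mA * N)\<^sup>2"
          by (intro power_mono) auto
        thus "(cmod (indicator B \<xi> * fourier \<mu> (\<lambda>x. indicator A x * f x) \<xi>))\<^sup>2 \<le> indicator B \<xi> * (sqrt mA * N)\<^sup>2"
          by (auto simp: indicator_def)
      qed
      also have "\<dots> = mB * (mA * N\<^sup>2)"
        using assms(12) mA0 by (simp add: mB_def power_mult_distrib)
      finally have "L2norm \<nu> (\<lambda>\<xi>. indicator B \<xi> * fourier \<mu> (\<lambda>x. indicator A x * f x) \<xi>) \<le> sqrt (mB * (mA * N\<^sup>2))"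
        unfolding L2norm_def by (rule real_sqrt_le_mono)
      also have "\<dots> = sqrt (mA * mB) * N" using Npos by (simp add: real_sqrt_mult mult_ac)
      finally show ?thesis .
    qed
    let ?Fh = "fourier \<mu> (\<lambda>x. indicator A x * f x)"
    have LFB: "L2 \<nu> (\<lambda>\<xi>. indicator B \<xi> * Ff \<xi>)" by (rule L2_ind[OF LFf assms(12)])
    have LhB: "L2 \<nu> (\<lambda>\<xi>. indicator B \<xi> * ?Fh \<xi>)" by (rule L2_ind[OF Fh[THEN conjunct1] assms(12)])
    have s1: "N \<le> L2norm \<nu> (\<lambda>\<xi>. Ff \<xi> - indicator B \<xi> * Ff \<xi>) + L2norm \<nu> (\<lambda>\<xi>. indicator B \<xi> * Ff \<xi>)"
      using tri1[OF LFf LFB] N_eq by simp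
    have s2: "L2norm \<nu> (\<lambda>\<xi>. indicator B \<xi> * Ff \<xi>) \<le>
        L2norm \<nu> (\<lambda>\<xi>. indicator B \<xi> * Ff \<xi> - indicator B \<xi> * ?Fh \<xi>) + L2norm \<nu> (\<lambda>\<xi>. indicator B \<xi> * ?Fh \<xi>)"
      by (rule tri1[OF LFB LhB])
    have s3: "L2norm \<nu> (\<lambda>\<xi>. indicator B \<xi> * Ff \<xi> - indicator B \<xi> * ?Fh \<xi>)
       = L2norm \<nu> (\<lambda>\<xi>. indicator B \<xi> * (Ff \<xi> - ?Fh \<xi>))" by (simp add: right_diff_distrib)
    have s4: "L2norm \<nu> (\<lambda>\<xi>. indicator B \<xi> * (Ff \<xi> - ?Fh \<xi>)) \<le> L2norm \<nu> (\<lambda>\<xi>. Ff \<xi> - ?Fh \<xi>)"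
      by (rule L2norm_ind_le[OF L2_diff[OF LFf Fh[THEN conjunct1]] assms(12)])
    have s5: "L2norm \<mu> (\<lambda>x. f x - indicator A x * f x) \<le> \<epsilon> * N" using assms(13) by (simp add: N_def)
    have s6: "L2norm \<nu> (\<lambda>\<xi>. Ff \<xi> - indicator B \<xi> * Ff \<xi>) \<le> \<delta> * N" using assms(14) N_eq by simp
    have "N \<le> \<delta> * N + \<epsilon> * N + sqrt (mA * mB) * N"
      using s1 s2 s3 s4 s5 s6 fh_le hB by linarith
    hence "(1 - \<epsilon> - \<delta>) * N \<le> sqrt (mA * mB) * N" by (simp add: algebra_simps)
    hence le: "1 - \<epsilon> - \<delta> \<le> sqrt (mA * mB)" using Npos by (simp add: mult_le_cancel_right)
    have "(1 - \<epsilon> - \<delta>)\<^sup>2 \<le> (sqrt (mA * mB))\<^sup>2"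
      by (rule power_mono[OF le]) (use assms(10) in linarith)
    hence "(1 - \<epsilon> - \<delta>)\<^sup>2 \<le> mA * mB" using mA0 by simp
    hence "ennreal ((1 - \<epsilon> - \<delta>)\<^sup>2) \<le> ennreal (mA * mB)" by (rule ennreal_leI)
    also have "\<dots> = emeasure \<mu> A * emeasure \<nu> B"
      using fin mA0 unfolding mA_def mB_def
      by (simp add: ennreal_mult emeasure_eq_ennreal_measure)
    finally show ?thesis .
  qed
qed


end
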